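(* Let $V_0\subseteq\mathbb{R}^n$ be a finite set, $\mathcal{K}$ a compact topological space, and for each $v\in V_0$ let $r_v:\mathcal{K}\to[-\infty,\infty)$ be continuous. For $\kappa\in\mathcal{K}$ set $f_\kappa(x)=\max_{v\in V_0}(\langle x,v\rangle+r_v(\kappa))$ for $x\in\mathbb{R}^n$, and assume that for every $\kappa$ the set $V_\kappa=\{v\in V_0:r_v(\kappa)>-\infty\}$ is nonempty (so $f_\kappa$ is real-valued) and that the point $u$ of minimal Euclidean norm in $\operatorname{conv}(V_\kappa)$ is the same for all $\kappa\in\mathcal{K}$. Then there is $C\in\mathbb{R}$ such that $f_\kappa(x)\ge\langle x,u\rangle+C$ for all $\kappa\in\mathcal{K}$ and all $x\in\mathbb{R}^n$.
   Context: $[-\infty,\infty)$ carries its usual order topology. *)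

theory Defs
  imports "HOL-Analysis.Analysis" "HOL-Library.Extended_Real"
begin

definition min_norm_point :: "'a::real_normed_vector set \<Rightarrow> 'a \<Rightarrow> bool" where
  "min_norm_point S u \<longleftrightarrow> u \<in> S \<and> (\<forall>w\<in>S. norm u \<le> norm w)"

end

theory Submission
  imports Defs
begin

lemma avg_le_some:
  fixes g l :: "'a \<Rightarrow> real"
  assumes "finite W" "W \<noteq> {}" "\<forall>x\<in>W. 0 \<le> l x" "sum l W = 1"
  shows "\<exists>v\<in>W. (\<Sum>x\<in>W. l x * g x) \<le> g v"
proof -
  have "Max (g ` W) \<in> g ` W" using assms(1,2) by simp
  then obtain v where v0: "v \<in> W" "g v = Max (g ` W)" by auto
  have v: "v \<in> W" "\<forall>w\<in>W. g w \<le> g v"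
    using v0 assms(1) by auto
  have "(\<Sum>x\<in>W. l x * g x) \<le> (\<Sum>x\<in>W. l x * g v)"
    by (rule sum_mono) (use assms(3) v in \<open>auto intro: mult_left_mono\<close>)
  also have "\<dots> = g v" using assms(4) by (simp add: sum_distrib_right[symmetric])
  finally show ?thesis using v by blast
qed

theorem lemma4p9:
  fixes V0 :: "(real ^ 'n) set"
    and K :: "'k topology"
    and r :: "real ^ 'n \<Rightarrow> 'k \<Rightarrow> ereal"
    and u :: "real ^ 'n"
  assumes "finite V0"
    and "compact_space K"
    and "\<And>v. v \<in> V0 \<Longrightarrow> continuous_map K (euclidean :: ereal topology) (r v)"
    and "\<And>v \<kappa>. v \<in> V0 \<Longrightarrow> \<kappa> \<in> topspace K \<Longrightarrow> r v \<kappa> < \<infinity>"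
    and "\<And>\<kappa>. \<kappa> \<in> topspace K \<Longrightarrow> {v \<in> V0. r v \<kappa> > -\<infinity>} \<noteq> {}"
    and "\<And>\<kappa>. \<kappa> \<in> topspace K \<Longrightarrow>
           min_norm_point (convex hull {v \<in> V0. r v \<kappa> > -\<infinity>}) u"
  shows "\<exists>C::real. \<forall>\<kappa>\<in>topspace K. \<forall>x::real ^ 'n.
           Max ((\<lambda>v. ereal (x \<bullet> v) + r v \<kappa>) ` V0) \<ge> ereal (x \<bullet> u + C)"
proof -
  have local: "\<exists>N c. openin K N \<and> k0 \<in> N \<and> (\<forall>\<kappa>\<in>N. \<forall>x::real ^ 'n.
           Max ((\<lambda>v. ereal (x \<bullet> v) + r v \<kappa>) ` V0) \<ge> ereal (x \<bullet> u + c))"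
    if k0: "k0 \<in> topspace K" for k0
  proof -
    define W where "W = {v \<in> V0. r v k0 > -\<infinity>}"
    have fW: "finite W" and WV: "W \<subseteq> V0" using assms(1) by (auto simp: W_def)
    have Wne: "W \<noteq> {}" using assms(5)[OF k0] by (simp add: W_def)
    have "u \<in> convex hull W" using assms(6)[OF k0] by (simp add: W_def min_norm_point_def)
    then obtain l where l: "\<forall>x\<in>W. 0 \<le> l x" "sum l W = 1" "(\<Sum>x\<in>W. l x *\<^sub>R x) = u"
      using convex_hull_finite[OF fW] by auto
    define a where "a v = real_of_ereal (r v k0)" for v
    have ra: "r v k0 = ereal (a v)" if "v \<in> W" for v
    proof -
      have "r v k0 < \<infinity>" "r v k0 > -\<infinity>" using that assms(4)[OF _ k0] WV unfolding W_def by auto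
      then show ?thesis unfolding a_def by (cases "r v k0") auto
    qed
    define N where "N = (\<Inter>v\<in>W. {\<kappa> \<in> topspace K. r v \<kappa> \<in> {ereal (a v - 1)<..}})"
    have oN: "openin K N" unfolding N_def
    proof (rule openin_INT2[OF fW Wne])
      fix v assume "v \<in> W"
      then show "openin K {\<kappa> \<in> topspace K. r v \<kappa> \<in> {ereal (a v - 1)<..}}"
        using WV assms(3) by (intro openin_continuous_map_preimage) auto
    qed
    have k0N: "k0 \<in> N" using k0 ra by (auto simp: N_def)
    define c where "c = (\<Sum>v\<in>W. l v * (a v - 1))"
    have "\<forall>\<kappa>\<in>N. \<forall>x::real ^ 'n.
           Max ((\<lambda>v. ereal (x \<bullet> v) + r v \<kappa>) ` V0) \<ge> ereal (x \<bullet> u + c)"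
    proof (intro ballI allI)
      fix \<kappa> x assume kN: "\<kappa> \<in> N"
      have "x \<bullet> u = (\<Sum>v\<in>W. l v * (x \<bullet> v))"
        using l(3) by (auto simp: inner_sum_right)
      then have "x \<bullet> u + c = (\<Sum>v\<in>W. l v * (x \<bullet> v + (a v - 1)))"
        by (simp add: c_def distrib_left sum.distrib)
      moreover obtain v where v: "v \<in> W"
        "(\<Sum>v\<in>W. l v * (x \<bullet> v + (a v - 1))) \<le> x \<bullet> v + (a v - 1)"
        using avg_le_some[OF fW Wne l(1,2), of "\<lambda>v. x \<bullet> v + (a v - 1)"] by blast
      ultimately have "ereal (x \<bullet> u + c) \<le> ereal (x \<bullet> v) + ereal (a v - 1)" by simp
      also have "\<dots> \<le> ereal (x \<bullet> v) + r v \<kappa>"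
      proof -
        have "ereal (a v - 1) \<le> r v \<kappa>" using kN v(1) unfolding N_def by (auto intro: less_imp_le)
        then show ?thesis by (rule add_left_mono)
      qed
      also have "\<dots> \<le> Max ((\<lambda>v. ereal (x \<bullet> v) + r v \<kappa>) ` V0)"
        using v(1) WV assms(1) by (intro Max_ge) auto
      finally show "Max ((\<lambda>v. ereal (x \<bullet> v) + r v \<kappa>) ` V0) \<ge> ereal (x \<bullet> u + c)" .
    qed
    then show ?thesis using oN k0N by blast
  qed
  then obtain N c where Nc: "\<And>k0. k0 \<in> topspace K \<Longrightarrow> openin K (N k0) \<and> k0 \<in> N k0 \<and>
      (\<forall>\<kappa>\<in>N k0. \<forall>x::real ^ 'n.
           Max ((\<lambda>v. ereal (x \<bullet> v) + r v \<kappa>) ` V0) \<ge> ereal (x \<bullet> u + c k0))"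
    by metis
  have cc: "\<forall>\<U>. (\<forall>U \<in> \<U>. openin K U) \<and> topspace K \<subseteq> \<Union>\<U>
          \<longrightarrow> (\<exists>\<F>. finite \<F> \<and> \<F> \<subseteq> \<U> \<and> topspace K \<subseteq> \<Union>\<F>)"
    using assms(2) unfolding compact_space_def compactin_def by blast
  have "(\<forall>U \<in> N ` topspace K. openin K U) \<and> topspace K \<subseteq> \<Union>(N ` topspace K)"
  proof
    show "\<forall>U \<in> N ` topspace K. openin K U"
    proof
      fix U assume "U \<in> N ` topspace K"
      then obtain k where "k \<in> topspace K" "U = N k" by auto
      then show "openin K U" using Nc[of k] by simp
    qed
    show "topspace K \<subseteq> \<Union>(N ` topspace K)"
    proof
      fix k assume k: "k \<in> topspace K"
      then have "k \<in> N k" using Nc[of k] by simp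
      then show "k \<in> \<Union>(N ` topspace K)" using k by blast
    qed
  qed
  then have "\<exists>F. finite F \<and> F \<subseteq> N ` topspace K \<and> topspace K \<subseteq> \<Union>F"
    by (rule cc[rule_format])
  then obtain F where F: "finite F" "F \<subseteq> N ` topspace K" "topspace K \<subseteq> \<Union>F"
    by (elim exE conjE)
  then obtain T where T0: "T \<subseteq> topspace K" "finite T" "F = N ` T"
    using finite_subset_image[OF F(1) F(2)] by (elim exE conjE) simp
  have T: "T \<subseteq> topspace K" "finite T" "topspace K \<subseteq> (\<Union>t\<in>T. N t)"
    using T0 F by auto
  show ?thesis
  proof (cases "T = {}")
    case True then show ?thesis using T by auto
  next
    case False
    show ?thesis
    proof (intro exI ballI allI)
      fix \<kappa> x assume "\<kappa> \<in> topspace K"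
      then obtain t where t: "t \<in> T" "\<kappa> \<in> N t" using T by auto
      have "Min (c ` T) \<le> c t" using t T by auto
      then have "ereal (x \<bullet> u + Min (c ` T)) \<le> ereal (x \<bullet> u + c t)" by simp
      also have "\<dots> \<le> Max ((\<lambda>v. ereal (x \<bullet> v) + r v \<kappa>) ` V0)"
        using Nc[of t] t T by auto
      finally show "Max ((\<lambda>v. ereal (x \<bullet> v) + r v \<kappa>) ` V0) \<ge> ereal (x \<bullet> u + Min (c ` T))" .
    qed
  qed
qed

end
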